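(* For any oriented tree-structure $\psi$, the $R$-linear map $\nu_0:\mathcal{T}_0(\psi)\to\mathcal{T}_0(\psi)\otimes\mathcal{T}_0(\psi)$ given on generators by $$\nu_0(T,t)=\sum_{e\in\operatorname{edg}(T)}\Big((T^1_e,t|_{T^1_e})\otimes(T^2_e,t|_{T^2_e})-(T^2_e,t|_{T^2_e})\otimes(T^1_e,t|_{T^1_e})\Big)$$ is a Lie cobracket.
   Context: $R$ commutative ring with unit. A Lie cobracket on an $R$-module $A$ is an $R$-linear $\nu:A\to A\otimes A$ with $\operatorname{Perm}\circ\nu=-\nu$ ($\operatorname{Perm}(x\otimes y)=y\otimes x$) and $(\mathrm{id}+\tau+\tau^2)(\mathrm{id}\otimes\nu)\nu=0$, $\tau(x\otimes y\otimes z)=z\otimes x\otimes y$. An oriented tree is a finite tree with oriented edges; its subtrees (trees formed by some of its vertices and edges) inherit orientations. $OTrees$ is the category of oriented trees with orientation-preserving embeddings (homeomorphisms onto subtrees, mapping vertices to vertices and edges to edges). An oriented tree-structure is a contravariant functor $\psi$ from $OTrees$ to sets; an oriented $\psi$-tree is a pair $(T,t)$, $t\in\psi(T)$; $(T,t)$ and $(\tilde T,\tilde t)$ are homeomorphic if there is an (orientation-preserving) homeomorphism $j:T\to\tilde T$ with $\psi(j)(\tilde t)=t$; $t|_{T'}=\psi(\iota)(t)$ for the inclusion $\iota:T'\to T$. $\mathcal{T}_0(\psi)$ is the free $R$-module on homeomorphism classes of oriented $\psi$-trees. For an edge $e$, removing its interior leaves two subtrees $T^1_e,T^2_e$, numbered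 so that $e$ is directed from a vertex of $T^2_e$ to a vertex of $T^1_e$. *)

theory Defs
  imports Main "HOL-Library.FuncSet"
begin

type_synonym otree = "nat set \<times> (nat \<times> nat) set"

definition verts :: "otree \<Rightarrow> nat set" where "verts T = fst T"
definition edgs :: "otree \<Rightarrow> (nat \<times> nat) set" where "edgs T = snd T"

definition is_otree :: "otree \<Rightarrow> bool" where
  "is_otree T \<longleftrightarrow> finite (verts T) \<and> verts T \<noteq> {} \<and> edgs T \<subseteq> verts T \<times> verts T
     \<and> (\<forall>u\<in>verts T. \<forall>v\<in>verts T. (u, v) \<in> (edgs T \<union> (edgs T)\<inverse>)\<^sup>*)
     \<and> card (edgs T) + 1 = card (verts T)"

text \<open>Orientation-preserving embeddings S -> T (morphisms of OTrees), given by their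
  (extensional) vertex map; the edge map is induced.\<close>
definition is_emb :: "otree \<Rightarrow> otree \<Rightarrow> (nat \<Rightarrow> nat) \<Rightarrow> bool" where
  "is_emb S T f \<longleftrightarrow> is_otree S \<and> is_otree T \<and> f \<in> extensional (verts S)
     \<and> inj_on f (verts S) \<and> f ` verts S \<subseteq> verts T
     \<and> (\<forall>(u, v)\<in>edgs S. (f u, f v) \<in> edgs T)"

definition is_iso :: "otree \<Rightarrow> otree \<Rightarrow> (nat \<Rightarrow> nat) \<Rightarrow> bool" where
  "is_iso S T f \<longleftrightarrow> is_emb S T f \<and> f ` verts S = verts T
     \<and> (\<lambda>(u, v). (f u, f v)) ` edgs S = edgs T"

text \<open>An oriented tree-structure: contravariant functor OTrees -> Sets, given by the
  object map obj and the morphism map mor S T f : obj T -> obj S.\<close>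
definition tree_structure :: "(otree \<Rightarrow> 'a set) \<Rightarrow> (otree \<Rightarrow> otree \<Rightarrow> (nat \<Rightarrow> nat) \<Rightarrow> 'a \<Rightarrow> 'a) \<Rightarrow> bool" where
  "tree_structure obj mor \<longleftrightarrow>
     (\<forall>S T f. is_emb S T f \<longrightarrow> (\<forall>x\<in>obj T. mor S T f x \<in> obj S))
   \<and> (\<forall>T. is_otree T \<longrightarrow> (\<forall>x\<in>obj T. mor T T (restrict id (verts T)) x = x))
   \<and> (\<forall>S T U f g. is_emb S T f \<longrightarrow> is_emb T U g \<longrightarrow>
        (\<forall>x\<in>obj U. mor S U (compose (verts S) g f) x = mor S T f (mor T U g x)))"

definition restr :: "(otree \<Rightarrow> otree \<Rightarrow> (nat \<Rightarrow> nat) \<Rightarrow> 'a \<Rightarrow> 'a) \<Rightarrow> otree \<Rightarrow> otree \<Rightarrow> 'a \<Rightarrow> 'a" where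
  "restr mor T S t = mor S T (restrict id (verts S)) t"

definition psi_trees :: "(otree \<Rightarrow> 'a set) \<Rightarrow> (otree \<times> 'a) set" where
  "psi_trees obj = {(T, t). is_otree T \<and> t \<in> obj T}"

definition homeo :: "(otree \<Rightarrow> 'a set) \<Rightarrow> (otree \<Rightarrow> otree \<Rightarrow> (nat \<Rightarrow> nat) \<Rightarrow> 'a \<Rightarrow> 'a)
    \<Rightarrow> ((otree \<times> 'a) \<times> (otree \<times> 'a)) set" where
  "homeo obj mor = {((T, t), (T', t')). (T, t) \<in> psi_trees obj \<and> (T', t') \<in> psi_trees obj
      \<and> (\<exists>j. is_iso T T' j \<and> mor T T' j t' = t)}"

definition classes :: "(otree \<Rightarrow> 'a set) \<Rightarrow> (otree \<Rightarrow> otree \<Rightarrow> (nat \<Rightarrow> nat) \<Rightarrow> 'a \<Rightarrow> 'a)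
    \<Rightarrow> (otree \<times> 'a) set set" where
  "classes obj mor = psi_trees obj // homeo obj mor"

definition cls :: "(otree \<Rightarrow> 'a set) \<Rightarrow> (otree \<Rightarrow> otree \<Rightarrow> (nat \<Rightarrow> nat) \<Rightarrow> 'a \<Rightarrow> 'a)
    \<Rightarrow> otree \<times> 'a \<Rightarrow> (otree \<times> 'a) set" where
  "cls obj mor p = homeo obj mor `` {p}"

text \<open>T_0(psi): finitely supported R-valued functions on homeomorphism classes
  (free R-module). T_0 (x) T_0 and T_0^(x)3 are represented as the free modules on
  pairs / triples of classes (canonical isomorphism for free modules).\<close>
definition T0 :: "(otree \<Rightarrow> 'a set) \<Rightarrow> (otree \<Rightarrow> otree \<Rightarrow> (nat \<Rightarrow> nat) \<Rightarrow> 'a \<Rightarrow> 'a)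
    \<Rightarrow> ((otree \<times> 'a) set \<Rightarrow> 'r::comm_ring_1) set" where
  "T0 obj mor = {x. finite {c. x c \<noteq> 0} \<and> {c. x c \<noteq> 0} \<subseteq> classes obj mor}"

definition comp_tree :: "otree \<Rightarrow> nat \<times> nat \<Rightarrow> nat \<Rightarrow> otree" where
  "comp_tree T e w = (let E' = edgs T - {e};
       V' = {x \<in> verts T. (w, x) \<in> (E' \<union> E'\<inverse>)\<^sup>*} in (V', E' \<inter> V' \<times> V'))"

text \<open>e = (u,v) is directed from u (in T^2_e) to v (in T^1_e).\<close>
definition T1e :: "otree \<Rightarrow> nat \<times> nat \<Rightarrow> otree" where "T1e T e = comp_tree T e (snd e)"
definition T2e :: "otree \<Rightarrow> nat \<times> nat \<Rightarrow> otree" where "T2e T e = comp_tree T e (fst e)"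

definition nu_gen :: "(otree \<Rightarrow> 'a set) \<Rightarrow> (otree \<Rightarrow> otree \<Rightarrow> (nat \<Rightarrow> nat) \<Rightarrow> 'a \<Rightarrow> 'a)
    \<Rightarrow> otree \<times> 'a \<Rightarrow> (otree \<times> 'a) set \<times> (otree \<times> 'a) set \<Rightarrow> 'r::comm_ring_1" where
  "nu_gen obj mor p = (\<lambda>(c1, c2). (case p of (T, t) \<Rightarrow>
     \<Sum>e\<in>edgs T.
       (let a1 = cls obj mor (T1e T e, restr mor T (T1e T e) t);
            a2 = cls obj mor (T2e T e, restr mor T (T2e T e) t) in
        (if (c1, c2) = (a1, a2) then 1 else 0) - (if (c1, c2) = (a2, a1) then 1 else 0))))"

definition nu_cls :: "(otree \<Rightarrow> 'a set) \<Rightarrow> (otree \<Rightarrow> otree \<Rightarrow> (nat \<Rightarrow> nat) \<Rightarrow> 'a \<Rightarrow> 'a)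
    \<Rightarrow> (otree \<times> 'a) set \<Rightarrow> (otree \<times> 'a) set \<times> (otree \<times> 'a) set \<Rightarrow> 'r::comm_ring_1" where
  "nu_cls obj mor c = nu_gen obj mor (SOME p. p \<in> c)"

definition nu0 :: "(otree \<Rightarrow> 'a set) \<Rightarrow> (otree \<Rightarrow> otree \<Rightarrow> (nat \<Rightarrow> nat) \<Rightarrow> 'a \<Rightarrow> 'a)
    \<Rightarrow> ((otree \<times> 'a) set \<Rightarrow> 'r::comm_ring_1)
    \<Rightarrow> (otree \<times> 'a) set \<times> (otree \<times> 'a) set \<Rightarrow> 'r" where
  "nu0 obj mor x = (\<lambda>k. \<Sum>c\<in>{c. x c \<noteq> 0}. x c * nu_cls obj mor c k)"

definition perm2 :: "('c \<times> 'c \<Rightarrow> 'r) \<Rightarrow> 'c \<times> 'c \<Rightarrow> 'r" where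
  "perm2 y = (\<lambda>(a, b). y (b, a))"

definition id_tensor_nu0 :: "(otree \<Rightarrow> 'a set) \<Rightarrow> (otree \<Rightarrow> otree \<Rightarrow> (nat \<Rightarrow> nat) \<Rightarrow> 'a \<Rightarrow> 'a)
    \<Rightarrow> ((otree \<times> 'a) set \<times> (otree \<times> 'a) set \<Rightarrow> 'r::comm_ring_1)
    \<Rightarrow> (otree \<times> 'a) set \<times> (otree \<times> 'a) set \<times> (otree \<times> 'a) set \<Rightarrow> 'r" where
  "id_tensor_nu0 obj mor y = (\<lambda>(a, b, c). \<Sum>d\<in>{d. y (a, d) \<noteq> 0}. y (a, d) * nu_cls obj mor d (b, c))"

text \<open>tau(x (x) y (x) z) = z (x) x (x) y, i.e. (tau w)(q,r,p) = w(p,q,r).\<close>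
definition tau3 :: "('c \<times> 'c \<times> 'c \<Rightarrow> 'r) \<Rightarrow> 'c \<times> 'c \<times> 'c \<Rightarrow> 'r" where
  "tau3 w = (\<lambda>(p, q, r). w (q, r, p))"

end

theory Submission
  imports Defs
begin
definition sy :: "('b \<times> 'b) set \<Rightarrow> ('b \<times> 'b) set" where "sy X = X \<union> X\<inverse>"

lemma sy_sym: "(a, b) \<in> (sy X)\<^sup>* \<Longrightarrow> (b, a) \<in> (sy X)\<^sup>*"
proof -
  assume "(a, b) \<in> (sy X)\<^sup>*"
  then have "(b, a) \<in> ((sy X)\<inverse>)\<^sup>*" by (simp add: rtrancl_converse)
  moreover have "(sy X)\<inverse> = sy X" by (auto simp: sy_def)
  ultimately show ?thesis by simp
qed

lemma sy_mono: "X \<subseteq> Y \<Longrightarrow> (sy X)\<^sup>* \<subseteq> (sy Y)\<^sup>*"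
  by (rule rtrancl_mono) (auto simp: sy_def)

lemma conn_card:
  assumes fin: "finite V" and EV: "E \<subseteq> V \<times> V" and r: "r \<in> V"
    and conn: "\<forall>v\<in>V. (r, v) \<in> (sy E)\<^sup>*"
  shows "card V \<le> card E + 1"
proof -
  define S where "S = sy E"
  define dist where "dist v = (LEAST n. (r, v) \<in> S ^^ n)" for v
  have key: "\<exists>u. (u, v) \<in> S \<and> dist u < dist v" if "v \<in> V" "v \<noteq> r" for v
  proof -
    from conn that obtain n where "(r, v) \<in> S ^^ n" unfolding S_def
      using rtrancl_power by blast
    then have d: "(r, v) \<in> S ^^ dist v" unfolding dist_def by (rule LeastI)
    show ?thesis
    proof (cases "dist v")
      case 0
      then show ?thesis using d that by simp
    next
      case (Suc m)
      with d obtain u where u1: "(r, u) \<in> S ^^ m" and u2: "(u, v) \<in> S" by auto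
      have "dist u \<le> m" unfolding dist_def using u1 by (rule Least_le)
      then show ?thesis using u2 Suc by auto
    qed
  qed
  define g where "g v = (SOME e. \<exists>u. e \<in> E \<and> (e = (u, v) \<or> e = (v, u)) \<and> dist u < dist v)" for v
  have g: "\<exists>u. g v \<in> E \<and> (g v = (u, v) \<or> g v = (v, u)) \<and> dist u < dist v" if "v \<in> V" "v \<noteq> r" for v
  proof -
    from key[OF that] obtain u where "(u, v) \<in> S" "dist u < dist v" by blast
    then have "\<exists>e u. e \<in> E \<and> (e = (u, v) \<or> e = (v, u)) \<and> dist u < dist v"
      unfolding S_def sy_def by blast
    then show ?thesis unfolding g_def by (rule someI_ex)
  qed
  have inj: "inj_on g (V - {r})"
  proof (rule inj_onI)
    fix v w assume v: "v \<in> V - {r}" and w: "w \<in> V - {r}" and eq: "g v = g w"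
    from g[of v] v obtain u where u: "g v = (u, v) \<or> g v = (v, u)" "dist u < dist v" by auto
    from g[of w] w obtain u' where u': "g w = (u', w) \<or> g w = (w, u')" "dist u' < dist w" by auto
    show "v = w"
    proof (rule ccontr)
      assume "v \<noteq> w"
      with u u' eq show False by auto
    qed
  qed
  have img: "g ` (V - {r}) \<subseteq> E" using g by blast
  have finE: "finite E" using fin EV finite_subset by blast
  have "card (V - {r}) \<le> card E" using card_inj_on_le[OF inj img finE] .
  then show ?thesis using r fin by simp
qed

definition rg :: "otree \<Rightarrow> (nat \<times> nat) set \<Rightarrow> nat \<Rightarrow> otree" where
  "rg T F w = ({x \<in> verts T. (w, x) \<in> (sy (edgs T - F))\<^sup>*},
      (edgs T - F) \<inter> {x \<in> verts T. (w, x) \<in> (sy (edgs T - F))\<^sup>*} \<times> {x \<in> verts T. (w, x) \<in> (sy (edgs T - F))\<^sup>*})"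

lemma comp_tree_rg: "comp_tree T e w = rg T {e} w"
  by (simp add: comp_tree_def rg_def sy_def Let_def)

lemma verts_rg: "verts (rg T F w) = {x \<in> verts T. (w, x) \<in> (sy (edgs T - F))\<^sup>*}"
  by (simp add: rg_def verts_def)

lemma edgs_rg: "edgs (rg T F w) = (edgs T - F) \<inter> verts (rg T F w) \<times> verts (rg T F w)"
  by (simp add: rg_def verts_def edgs_def)

definition gr :: "otree \<Rightarrow> bool" where "gr T \<longleftrightarrow> edgs T \<subseteq> verts T \<times> verts T"

lemma otree_gr: "is_otree T \<Longrightarrow> gr T" by (simp add: is_otree_def gr_def)

lemma sy_step_verts: "gr T \<Longrightarrow> (a, b) \<in> sy (edgs T - F) \<Longrightarrow> a \<in> verts T \<and> b \<in> verts T"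
  by (auto simp: gr_def sy_def)

lemma rg_sub: "verts (rg T F w) \<subseteq> verts T" "edgs (rg T F w) \<subseteq> edgs T"
  by (auto simp: verts_rg edgs_rg)

lemma rg_gr: "gr (rg T F w)" by (auto simp: gr_def edgs_rg)

lemma rg_self: "w \<in> verts T \<Longrightarrow> w \<in> verts (rg T F w)"
  by (simp add: verts_rg)

lemma rg_conn:
  assumes g: "gr T" and x: "x \<in> verts (rg T F w)"
  shows "(w, x) \<in> (sy (edgs (rg T F w)))\<^sup>*"
proof -
  have "(w, x) \<in> (sy (edgs T - F))\<^sup>*" using x by (simp add: verts_rg)
  then show ?thesis
  proof (induction rule: rtrancl_induct)
    case base then show ?case by simp
  next
    case (step y z)
    have yz: "y \<in> verts T" "z \<in> verts T" using sy_step_verts[OF g step(2)] by auto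
    have "(w, z) \<in> (sy (edgs T - F))\<^sup>*" using step(1,2) by (rule rtrancl_into_rtrancl)
    then have "y \<in> verts (rg T F w)" "z \<in> verts (rg T F w)" using yz step(1) by (auto simp: verts_rg)
    then have "(y, z) \<in> sy (edgs (rg T F w))" using step(2) by (auto simp: sy_def edgs_rg)
    then show ?case using step(3) by (meson rtrancl_into_rtrancl)
  qed
qed

lemma rg_conn2:
  assumes g: "gr T" and x: "x \<in> verts (rg T F w)" and y: "y \<in> verts (rg T F w)"
  shows "(x, y) \<in> (sy (edgs (rg T F w)))\<^sup>*"
  using sy_sym[OF rg_conn[OF g x]] rg_conn[OF g y] by (rule rtrancl_trans)

lemma rg_same:
  assumes "(z, z') \<in> (sy (edgs T - F))\<^sup>*"
  shows "rg T F z = rg T F z'"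
proof -
  have "verts (rg T F z) = verts (rg T F z')"
    using assms sy_sym[OF assms] by (auto simp: verts_rg intro: rtrancl_trans)
  then show ?thesis by (metis edgs_rg prod.collapse verts_def edgs_def)
qed

lemma rg_mono: "F \<subseteq> G \<Longrightarrow> verts (rg T G z) \<subseteq> verts (rg T F z)"
  unfolding verts_rg using sy_mono[of "edgs T - G" "edgs T - F"] by auto

lemma rg_eqI: "verts A = verts B \<Longrightarrow> edgs A = edgs B \<Longrightarrow> A = B"
  by (metis prod.collapse verts_def edgs_def)

lemma rg_nest:
  assumes g: "gr T" and z: "z \<in> verts (rg T F w)"
  shows "rg (rg T F w) G z = rg T (F \<union> G) z"
proof -
  let ?A = "rg T F w"
  have sub: "edgs ?A - G \<subseteq> edgs T - (F \<union> G)" by (auto simp: edgs_rg)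
  have 1: "verts (rg ?A G z) \<subseteq> verts (rg T (F \<union> G) z)"
    using sy_mono[OF sub] rg_sub(1)[of T F w] by (auto simp: verts_rg)
  have 2: "y \<in> verts ?A \<and> (z, y) \<in> (sy (edgs ?A - G))\<^sup>*" if "(z, y) \<in> (sy (edgs T - (F \<union> G)))\<^sup>*" for y
    using that
  proof (induction rule: rtrancl_induct)
    case base then show ?case using z by simp
  next
    case (step a b)
    have ab: "a \<in> verts T" "b \<in> verts T" using sy_step_verts[OF g step(2)] by auto
    have "(a, b) \<in> sy (edgs T - F)" using step(2) by (auto simp: sy_def)
    moreover have "(w, a) \<in> (sy (edgs T - F))\<^sup>*" using step(3) by (simp add: verts_rg)
    ultimately have "(w, b) \<in> (sy (edgs T - F))\<^sup>*" by (rule rtrancl_into_rtrancl[rotated])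
    then have bA: "b \<in> verts ?A" using ab by (simp add: verts_rg)
    have "(a, b) \<in> sy (edgs ?A - G)" using step(2,3) bA by (auto simp: sy_def edgs_rg)
    then show ?case using bA step(3) by (meson rtrancl_into_rtrancl)
  qed
  have V: "verts (rg ?A G z) = verts (rg T (F \<union> G) z)"
    using 1 2 by (auto simp: verts_rg)
  have "edgs (rg ?A G z) = edgs (rg T (F \<union> G) z)"
    using V rg_sub(1)[of ?A G z] unfolding edgs_rg[of ?A] edgs_rg[of T] by (auto simp: edgs_rg)
  with V show ?thesis by (rule rg_eqI)
qed

lemma rg_far:
  assumes g: "gr T" and f: "fst f \<notin> verts (rg T F z)"
  shows "rg T (insert f F) z = rg T F z"
proof -
  have 2: "(z, y) \<in> (sy (edgs T - insert f F))\<^sup>*" if "(z, y) \<in> (sy (edgs T - F))\<^sup>*" for y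
    using that
  proof (induction rule: rtrancl_induct)
    case base then show ?case by simp
  next
    case (step a b)
    have ab: "a \<in> verts T" "b \<in> verts T" using sy_step_verts[OF g step(2)] by auto
    have zb: "(z, b) \<in> (sy (edgs T - F))\<^sup>*" using step(1,2) by (rule rtrancl_into_rtrancl)
    have "fst f \<noteq> a" "fst f \<noteq> b" using f ab step(1) zb by (auto simp: verts_rg)
    then have "(a, b) \<in> sy (edgs T - insert f F)" using step(2) by (auto simp: sy_def)
    then show ?case using step(3) by (meson rtrancl_into_rtrancl)
  qed
  have V: "verts (rg T (insert f F) z) = verts (rg T F z)"
    using rg_mono[of F "insert f F" T z] 2 by (auto simp: verts_rg)
  have "edgs (rg T (insert f F) z) = edgs (rg T F z)"
    unfolding edgs_rg V using f by (cases f) auto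
  with V show ?thesis by (rule rg_eqI)
qed

lemma is_otreeI:
  assumes "finite (verts T)" "w \<in> verts T" "gr T" "\<forall>x\<in>verts T. (w, x) \<in> (sy (edgs T))\<^sup>*"
    "card (edgs T) + 1 = card (verts T)"
  shows "is_otree T"
proof -
  have "(u, v) \<in> (sy (edgs T))\<^sup>*" if "u \<in> verts T" "v \<in> verts T" for u v
    using sy_sym[of w u] assms(4) that by (meson rtrancl_trans)
  then show ?thesis using assms unfolding is_otree_def gr_def sy_def by blast
qed

lemma otree_conn: "is_otree T \<Longrightarrow> u \<in> verts T \<Longrightarrow> v \<in> verts T \<Longrightarrow> (u, v) \<in> (sy (edgs T))\<^sup>*"
  by (simp add: is_otree_def sy_def)

lemma tree_cut:
  assumes T: "is_otree T" and e: "e \<in> edgs T"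
  shows "fst e \<noteq> snd e" "is_otree (rg T {e} (fst e))" "is_otree (rg T {e} (snd e))"
    "verts (rg T {e} (fst e)) \<inter> verts (rg T {e} (snd e)) = {}"
    "verts (rg T {e} (fst e)) \<union> verts (rg T {e} (snd e)) = verts T"
    "edgs (rg T {e} (fst e)) \<union> edgs (rg T {e} (snd e)) = edgs T - {e}"
proof -
  define u v where "u = fst e" and "v = snd e"
  have ev: "e = (u, v)" by (simp add: u_def v_def)
  define V E where "V = verts T" and "E = edgs T"
  define E' where "E' = E - {e}"
  have g: "gr T" using T by (rule otree_gr)
  have finV: "finite V" and VE: "E \<subseteq> V \<times> V" and cardE: "card E + 1 = card V"
    using T by (auto simp: is_otree_def V_def E_def)
  have finE: "finite E" using finV VE finite_subset by blast
  have uV: "u \<in> V" and vV: "v \<in> V" using VE e ev E_def by auto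
  have pos: "card E > 0" using e finE card_gt_0_iff E_def by auto
  have cE': "card E' + 2 = card V" using cardE e finE pos by (simp add: E'_def E_def card_Diff_singleton)
  have nuv: "(u, v) \<notin> (sy E')\<^sup>*"
  proof
    assume uv: "(u, v) \<in> (sy E')\<^sup>*"
    have "sy E \<subseteq> (sy E')\<^sup>*"
    proof
      fix p assume p: "p \<in> sy E"
      show "p \<in> (sy E')\<^sup>*"
      proof (cases "p \<in> sy E'")
        case True then show ?thesis by auto
      next
        case False
        then have "p = (u, v) \<or> p = (v, u)" using p ev by (auto simp: sy_def E'_def)
        then show ?thesis using uv sy_sym[OF uv] by auto
      qed
    qed
    then have sub: "(sy E)\<^sup>* \<subseteq> (sy E')\<^sup>*" by (rule rtrancl_subset_rtrancl)
    have "\<forall>x\<in>V. (u, x) \<in> (sy E')\<^sup>*" using otree_conn[OF T] uV sub by (auto simp: V_def E_def)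
    moreover have "E' \<subseteq> V \<times> V" using VE by (auto simp: E'_def)
    ultimately have "card V \<le> card E' + 1" using conn_card[OF finV _ uV] by blast
    with cE' show False by simp
  qed
  show "fst e \<noteq> snd e" using nuv unfolding u_def v_def by (metis rtrancl.rtrancl_refl)
  define Cu Cv where "Cu = verts (rg T {e} u)" and "Cv = verts (rg T {e} v)"
  have Cu: "Cu = {x \<in> V. (u, x) \<in> (sy E')\<^sup>*}" and Cv: "Cv = {x \<in> V. (v, x) \<in> (sy E')\<^sup>*}"
    by (simp_all add: Cu_def Cv_def verts_rg V_def E_def E'_def)
  show disj: "verts (rg T {e} (fst e)) \<inter> verts (rg T {e} (snd e)) = {}"
  proof -
    have "Cu \<inter> Cv = {}"
      using nuv unfolding Cu Cv by (auto dest: sy_sym intro: rtrancl_trans)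
    then show ?thesis by (simp add: Cu_def Cv_def u_def v_def)
  qed
  have cover: "Cu \<union> Cv = V"
  proof -
    have "(u, x) \<in> (sy E')\<^sup>* \<or> (v, x) \<in> (sy E')\<^sup>*" if "(u, x) \<in> (sy E)\<^sup>*" for x
      using that
    proof (induction rule: rtrancl_induct)
      case base then show ?case by simp
    next
      case (step y z)
      show ?case
      proof (cases "(y, z) \<in> sy E'")
        case True then show ?thesis using step(3) by (meson rtrancl_into_rtrancl)
      next
        case False
        then have "(y, z) = (u, v) \<or> (y, z) = (v, u)" using step(2) ev by (auto simp: sy_def E'_def)
        then show ?thesis by auto
      qed
    qed
    then show ?thesis using otree_conn[OF T uV[unfolded V_def]] unfolding Cu Cv V_def E_def by blast
  qed
  then show "verts (rg T {e} (fst e)) \<union> verts (rg T {e} (snd e)) = verts T"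
    by (simp add: Cu_def Cv_def u_def v_def V_def)
  define Eu Ev where "Eu = edgs (rg T {e} u)" and "Ev = edgs (rg T {e} v)"
  have Eu: "Eu = E' \<inter> Cu \<times> Cu" and Ev: "Ev = E' \<inter> Cv \<times> Cv"
    by (simp_all add: Eu_def Ev_def Cu_def Cv_def edgs_rg E'_def E_def)
  have ecover: "Eu \<union> Ev = E'"
  proof -
    have "p \<in> Eu \<union> Ev" if p: "p \<in> E'" for p
    proof -
      obtain a b where ab: "p = (a, b)" by (cases p)
      have "(a, b) \<in> sy E'" using p ab by (auto simp: sy_def)
      moreover have "a \<in> V" "b \<in> V" using p ab VE by (auto simp: E'_def)
      ultimately have "(a \<in> Cu \<and> b \<in> Cu) \<or> (a \<in> Cv \<and> b \<in> Cv)"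
        using cover unfolding Cu Cv by (auto intro: rtrancl_into_rtrancl)
      then show ?thesis using p ab Eu Ev by auto
    qed
    then show ?thesis using Eu Ev by auto
  qed
  then show "edgs (rg T {e} (fst e)) \<union> edgs (rg T {e} (snd e)) = edgs T - {e}"
    by (simp add: Eu_def Ev_def u_def v_def E'_def E_def)
  have CuV: "Cu \<subseteq> V" and CvV: "Cv \<subseteq> V" using Cu Cv by auto
  have finCu: "finite Cu" and finCv: "finite Cv" using CuV CvV finV finite_subset by auto
  have dCuv: "Cu \<inter> Cv = {}" using disj by (simp add: Cu_def Cv_def u_def v_def)
  have cardC: "card Cu + card Cv = card V"
    using card_Un_disjoint[OF finCu finCv dCuv] cover by simp
  have dE: "Eu \<inter> Ev = {}" using dCuv Eu Ev by auto
  have finEu: "finite Eu" and finEv: "finite Ev" using Eu Ev finE by (auto simp: E'_def intro: finite_subset)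
  have cardEs: "card Eu + card Ev = card E'"
    using card_Un_disjoint[OF finEu finEv dE] ecover by simp
  have uCu: "u \<in> Cu" and vCv: "v \<in> Cv" using uV vV Cu Cv by auto
  have connu: "\<forall>x\<in>Cu. (u, x) \<in> (sy Eu)\<^sup>*" using rg_conn[OF g] by (simp add: Cu_def Eu_def)
  have connv: "\<forall>x\<in>Cv. (v, x) \<in> (sy Ev)\<^sup>*" using rg_conn[OF g] by (simp add: Cv_def Ev_def)
  have EuC: "Eu \<subseteq> Cu \<times> Cu" and EvC: "Ev \<subseteq> Cv \<times> Cv" using Eu Ev by auto
  have c1: "card Cu \<le> card Eu + 1" by (rule conn_card[OF finCu EuC uCu connu])
  have c2: "card Cv \<le> card Ev + 1" by (rule conn_card[OF finCv EvC vCv connv])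
  have q1: "card Eu + 1 = card Cu" and q2: "card Ev + 1 = card Cv"
    using c1 c2 cardC cardEs cE' by linarith+
  show "is_otree (rg T {e} (fst e))"
    using is_otreeI[of "rg T {e} u" u] finCu uCu rg_gr connu q1
    by (simp add: Cu_def Eu_def u_def)
  show "is_otree (rg T {e} (snd e))"
    using is_otreeI[of "rg T {e} v" v] finCv vCv rg_gr connv q2
    by (simp add: Cv_def Ev_def v_def)
qed

lemma tree_cut_edisj:
  assumes T: "is_otree T" and e: "e \<in> edgs T"
  shows "edgs (rg T {e} (fst e)) \<inter> edgs (rg T {e} (snd e)) = {}"
  using tree_cut(4)[OF T e] by (auto simp: edgs_rg)

lemma edge_verts: "gr T \<Longrightarrow> f \<in> edgs T \<Longrightarrow> fst f \<in> verts T \<and> snd f \<in> verts T"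
  by (auto simp: gr_def)

lemma side_far:
  assumes T: "is_otree T" and e: "e \<in> edgs T" and f: "f \<in> edgs (rg T {e} x)"
    and x: "x \<in> {fst e, snd e}" and x': "x' \<in> {fst e, snd e}" "x' \<noteq> x"
  shows "rg T {e, f} x' = rg T {e} x'"
proof -
  have "fst f \<in> verts (rg T {e} x)" using edge_verts[OF rg_gr f] by simp
  moreover have "verts (rg T {e} x) \<inter> verts (rg T {e} x') = {}"
    using tree_cut(4)[OF T e] x x' by auto
  ultimately have "fst f \<notin> verts (rg T {e} x')" by auto
  from rg_far[OF otree_gr[OF T] this] show ?thesis by (simp add: insert_commute)
qed

lemma mid:
  assumes T: "is_otree T" and e: "e \<in> edgs T" and f: "f \<in> edgs (rg T {e} x)"
    and x: "x \<in> {fst e, snd e}"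
  shows "\<exists>y\<in>{fst f, snd f}. e \<in> edgs (rg T {f} y) \<and> rg T {e, f} x = rg T {e, f} y"
proof -
  let ?A = "rg T {e} x"
  have g: "gr T" using T by (rule otree_gr)
  have A: "is_otree ?A" using tree_cut(2,3)[OF T e] x by auto
  have xV: "x \<in> verts T" using edge_verts[OF g e] x by auto
  have xA: "x \<in> verts ?A" using xV by (rule rg_self)
  have fE: "f \<in> edgs T - {e}" using f by (auto simp: edgs_rg)
  then have ef: "e \<noteq> f" by auto
  have fA: "fst f \<in> verts ?A" "snd f \<in> verts ?A" using edge_verts[OF rg_gr f] by auto
  from tree_cut(5)[OF A f] xA obtain y where y: "y \<in> {fst f, snd f}" and xy: "x \<in> verts (rg ?A {f} y)"
    by auto
  have yA: "y \<in> verts ?A" using y fA by auto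
  have nest: "rg ?A {f} y = rg T {e, f} y" using rg_nest[OF g yA, of "{f}"] by (simp add: insert_commute)
  have xy2: "x \<in> verts (rg T {e, f} y)" using xy nest by simp
  then have "(y, x) \<in> (sy (edgs T - {e, f}))\<^sup>*" by (simp add: verts_rg)
  then have same: "rg T {e, f} x = rg T {e, f} y" using rg_same[of y x T "{e,f}"] by simp
  have xf: "x \<in> verts (rg T {f} y)" using xy2 rg_mono[of "{f}" "{e, f}" T y] by auto
  have yx: "(y, x) \<in> (sy (edgs T - {f}))\<^sup>*" using xf by (simp add: verts_rg)
  have e1: "(fst e, snd e) \<in> sy (edgs T - {f})" "(snd e, fst e) \<in> sy (edgs T - {f})"
    using e ef by (auto simp: sy_def)
  have "(y, fst e) \<in> (sy (edgs T - {f}))\<^sup>*" "(y, snd e) \<in> (sy (edgs T - {f}))\<^sup>*"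
    using x yx e1 by (auto intro: rtrancl_into_rtrancl)
  then have "fst e \<in> verts (rg T {f} y)" "snd e \<in> verts (rg T {f} y)"
    using edge_verts[OF g e] by (auto simp: verts_rg)
  then have "e \<in> edgs (rg T {f} y)" using e ef by (cases e) (auto simp: edgs_rg)
  then show ?thesis using y same by blast
qed

lemma ts1: "tree_structure obj mor \<Longrightarrow> is_emb S T f \<Longrightarrow> x \<in> obj T \<Longrightarrow> mor S T f x \<in> obj S"
  unfolding tree_structure_def by blast
lemma ts2: "tree_structure obj mor \<Longrightarrow> is_otree T \<Longrightarrow> x \<in> obj T \<Longrightarrow> mor T T (restrict id (verts T)) x = x"
  unfolding tree_structure_def by blast
lemma ts3: "tree_structure obj mor \<Longrightarrow> is_emb S T f \<Longrightarrow> is_emb T U g \<Longrightarrow> x \<in> obj U \<Longrightarrow>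
   mor S U (compose (verts S) g f) x = mor S T f (mor T U g x)"
  unfolding tree_structure_def by blast

lemma emb_incl: "is_otree S \<Longrightarrow> is_otree T \<Longrightarrow> verts S \<subseteq> verts T \<Longrightarrow> edgs S \<subseteq> edgs T \<Longrightarrow>
   is_emb S T (restrict id (verts S))"
  unfolding is_emb_def using otree_gr[of S] by (auto simp: gr_def)

lemma iso_alt: "is_iso S T j \<longleftrightarrow> is_otree S \<and> is_otree T \<and> j \<in> extensional (verts S)
   \<and> inj_on j (verts S) \<and> j ` verts S = verts T \<and> (\<lambda>(u, v). (j u, j v)) ` edgs S = edgs T"
  unfolding is_iso_def is_emb_def by auto

lemma iso_emb: "is_iso S T j \<Longrightarrow> is_emb S T j" by (simp add: is_iso_def)

lemma iso_refl: "is_otree T \<Longrightarrow> is_iso T T (restrict id (verts T))"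
proof -
  assume T: "is_otree T"
  have "(\<lambda>(u, v). (restrict id (verts T) u, restrict id (verts T) v)) ` edgs T = edgs T"
    using otree_gr[OF T] unfolding gr_def
    by (force simp: image_iff)
  then show ?thesis using T by (simp add: iso_alt inj_on_def)
qed

lemma iso_inv:
  assumes j: "is_iso S T j"
  shows "is_iso T S (restrict (inv_into (verts S) j) (verts T))"
    "compose (verts T) j (restrict (inv_into (verts S) j) (verts T)) = restrict id (verts T)"
proof -
  let ?j' = "restrict (inv_into (verts S) j) (verts T)"
  from j have S: "is_otree S" and T: "is_otree T" and inj: "inj_on j (verts S)"
    and im: "j ` verts S = verts T" and eim: "(\<lambda>(u, v). (j u, j v)) ` edgs S = edgs T"
    by (auto simp: iso_alt)
  have gS: "gr S" using S by (rule otree_gr)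
  have inv1: "?j' (j x) = x" if "x \<in> verts S" for x
  proof -
    have "j x \<in> verts T" using that im by blast
    then show ?thesis using inv_into_f_f[OF inj that] by simp
  qed
  have fi: "j (?j' y) = y" if "y \<in> verts T" for y
  proof -
    have "y \<in> j ` verts S" using that im by simp
    then show ?thesis using that by (simp add: f_inv_into_f)
  qed
  have inj': "inj_on ?j' (verts T)"
  proof (rule inj_onI)
    fix a b assume a: "a \<in> verts T" and b: "b \<in> verts T" and eq: "?j' a = ?j' b"
    have "a = j (?j' a)" using fi[OF a] by simp
    also have "\<dots> = j (?j' b)" using eq by simp
    also have "\<dots> = b" using fi[OF b] .
    finally show "a = b" .
  qed
  have im': "?j' ` verts T = verts S"
  proof
    show "?j' ` verts T \<subseteq> verts S"
    proof
      fix x assume "x \<in> ?j' ` verts T"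
      then obtain y where y: "y \<in> verts T" "x = ?j' y" by blast
      have "y \<in> j ` verts S" using y im by simp
      then have "inv_into (verts S) j y \<in> verts S" by (rule inv_into_into)
      then show "x \<in> verts S" using y by simp
    qed
    show "verts S \<subseteq> ?j' ` verts T"
    proof
      fix x assume x: "x \<in> verts S"
      have "j x \<in> verts T" using x im by blast
      moreover have "x = ?j' (j x)" using inv1[OF x] by simp
      ultimately show "x \<in> ?j' ` verts T" by blast
    qed
  qed
  have eim': "(\<lambda>(u, v). (?j' u, ?j' v)) ` edgs T = edgs S"
  proof -
    have "(\<lambda>(u, v). (?j' u, ?j' v)) ` edgs T = (\<lambda>(u, v). (?j' u, ?j' v)) ` (\<lambda>(u, v). (j u, j v)) ` edgs S"
      using eim by simp
    also have "\<dots> = (\<lambda>x. x) ` edgs S"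
      unfolding image_image
    proof (rule image_cong[OF refl])
      fix p assume p: "p \<in> edgs S"
      then have "fst p \<in> verts S" "snd p \<in> verts S" using gS by (auto simp: gr_def)
      then show "(\<lambda>(u, v). (?j' u, ?j' v)) ((\<lambda>(u, v). (j u, j v)) p) = p"
        using inv1 by (cases p) auto
    qed
    finally show ?thesis by simp
  qed
  show "is_iso T S ?j'" using S T inj' im' eim' by (simp add: iso_alt)
  show "compose (verts T) j ?j' = restrict id (verts T)"
    unfolding compose_def using fi by (auto simp: fun_eq_iff)
qed

lemma iso_comp:
  assumes f: "is_iso S T f" and g: "is_iso T U g"
  shows "is_iso S U (compose (verts S) g f)"
proof -
  from f have S: "is_otree S" and T: "is_otree T" and inj: "inj_on f (verts S)"
    and im: "f ` verts S = verts T" and eim: "(\<lambda>(u, v). (f u, f v)) ` edgs S = edgs T"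
    by (auto simp: iso_alt)
  from g have U: "is_otree U" and injg: "inj_on g (verts T)"
    and img: "g ` verts T = verts U" and eimg: "(\<lambda>(u, v). (g u, g v)) ` edgs T = edgs U"
    by (auto simp: iso_alt)
  have gS: "gr S" using S by (rule otree_gr)
  let ?h = "compose (verts S) g f"
  have h: "?h x = g (f x)" if "x \<in> verts S" for x using that by (simp add: compose_def)
  have fV: "f x \<in> verts T" if "x \<in> verts S" for x using that im by blast
  have inj': "inj_on ?h (verts S)"
  proof (rule inj_onI)
    fix a b assume a: "a \<in> verts S" and b: "b \<in> verts S" and eq: "?h a = ?h b"
    then have "g (f a) = g (f b)" using h by simp
    then have "f a = f b" using injg fV[OF a] fV[OF b] by (simp add: inj_on_def)
    then show "a = b" using inj a b by (simp add: inj_on_def)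
  qed
  have "?h ` verts S = g ` f ` verts S" unfolding image_image using h by (rule image_cong[OF refl])
  then have im': "?h ` verts S = verts U" using im img by simp
  have "(\<lambda>(u, v). (?h u, ?h v)) ` edgs S = (\<lambda>(u, v). (g u, g v)) ` (\<lambda>(u, v). (f u, f v)) ` edgs S"
    unfolding image_image
  proof (rule image_cong[OF refl])
    fix p assume p: "p \<in> edgs S"
    then have "fst p \<in> verts S" "snd p \<in> verts S" using gS by (auto simp: gr_def)
    then show "(\<lambda>(u, v). (?h u, ?h v)) p = (\<lambda>(u, v). (g u, g v)) ((\<lambda>(u, v). (f u, f v)) p)"
      using h by (cases p) auto
  qed
  then have eim': "(\<lambda>(u, v). (?h u, ?h v)) ` edgs S = edgs U" using eim eimg by simp
  show ?thesis using S U inj' im' eim' by (simp add: iso_alt)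
qed

lemma homeo_equiv:
  assumes ts: "tree_structure obj mor"
  shows "equiv (psi_trees obj) (homeo obj mor)"
proof (rule equivI)
  show "homeo obj mor \<subseteq> psi_trees obj \<times> psi_trees obj" by (auto simp: homeo_def)
  show "refl_on (psi_trees obj) (homeo obj mor)"
  proof (rule refl_onI)
    fix p assume p: "p \<in> psi_trees obj"
    obtain T t where pt: "p = (T, t)" by (cases p)
    have T: "is_otree T" and t: "t \<in> obj T" using p pt by (auto simp: psi_trees_def)
    show "(p, p) \<in> homeo obj mor"
      using p pt iso_refl[OF T] ts2[OF ts T t] unfolding homeo_def by blast
  qed
  show "sym (homeo obj mor)"
  proof (rule symI)
    fix p q assume pq: "(p, q) \<in> homeo obj mor"
    obtain T t T' t' where pt: "p = (T, t)" "q = (T', t')" by (cases p, cases q)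
    from pq pt obtain j where j: "is_iso T T' j" and jt: "mor T T' j t' = t"
      and P: "(T, t) \<in> psi_trees obj" and Q: "(T', t') \<in> psi_trees obj"
      by (auto simp: homeo_def)
    have t': "t' \<in> obj T'" using Q by (simp add: psi_trees_def)
    let ?j' = "restrict (inv_into (verts T) j) (verts T')"
    have "mor T' T ?j' t = mor T' T' (compose (verts T') j ?j') t'"
      using ts3[OF ts iso_emb[OF iso_inv(1)[OF j]] iso_emb[OF j] t'] jt by simp
    also have "\<dots> = t'" using iso_inv(2)[OF j] ts2[OF ts _ t'] Q by (simp add: psi_trees_def)
    finally show "(q, p) \<in> homeo obj mor"
      using iso_inv(1)[OF j] P Q pt unfolding homeo_def by blast
  qed
  show "trans (homeo obj mor)"
  proof (rule transI)
    fix p q r assume pq: "(p, q) \<in> homeo obj mor" and qr: "(q, r) \<in> homeo obj mor"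
    obtain T t T' t' T'' t'' where pt: "p = (T, t)" "q = (T', t')" "r = (T'', t'')"
      by (cases p, cases q, cases r)
    from pq pt obtain j where j: "is_iso T T' j" and jt: "mor T T' j t' = t"
      and P: "(T, t) \<in> psi_trees obj" by (auto simp: homeo_def)
    from qr pt obtain k where k: "is_iso T' T'' k" and kt: "mor T' T'' k t'' = t'"
      and R: "(T'', t'') \<in> psi_trees obj" by (auto simp: homeo_def)
    have t'': "t'' \<in> obj T''" using R by (simp add: psi_trees_def)
    have "mor T T'' (compose (verts T) k j) t'' = t"
      using ts3[OF ts iso_emb[OF j] iso_emb[OF k] t''] jt kt by simp
    then show "(p, r) \<in> homeo obj mor"
      using iso_comp[OF j k] P R pt unfolding homeo_def by blast
  qed
qed

lemma cls_eq: "tree_structure obj mor \<Longrightarrow> (p, q) \<in> homeo obj mor \<Longrightarrow> cls obj mor p = cls obj mor q"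
  unfolding cls_def using homeo_equiv equiv_class_eq by metis

lemma cls_self: "tree_structure obj mor \<Longrightarrow> p \<in> psi_trees obj \<Longrightarrow> p \<in> cls obj mor p"
  unfolding cls_def using homeo_equiv equiv_class_self by metis

lemma restr_in:
  assumes ts: "tree_structure obj mor" and S: "is_otree S" and T: "is_otree T"
    and sub: "verts S \<subseteq> verts T" "edgs S \<subseteq> edgs T" and t: "t \<in> obj T"
  shows "restr mor T S t \<in> obj S"
  unfolding restr_def using ts1[OF ts emb_incl[OF S T sub] t] .

lemma restr_restr:
  assumes ts: "tree_structure obj mor" and A: "is_otree A" and B: "is_otree B" and T: "is_otree T"
    and AB: "verts A \<subseteq> verts B" "edgs A \<subseteq> edgs B"
    and BT: "verts B \<subseteq> verts T" "edgs B \<subseteq> edgs T" and t: "t \<in> obj T"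
  shows "restr mor B A (restr mor T B t) = restr mor T A t"
proof -
  have "compose (verts A) (restrict id (verts B)) (restrict id (verts A)) = restrict id (verts A)"
    using AB unfolding compose_def by (auto simp: fun_eq_iff)
  then show ?thesis
    unfolding restr_def using ts3[OF ts emb_incl[OF A B AB] emb_incl[OF B T BT] t] by simp
qed

lemma iso_reach:
  assumes j: "is_iso T T' j" and e: "e \<in> edgs T"
    and ab: "(a, b) \<in> (sy (edgs T - {e}))\<^sup>*"
  shows "(j a, j b) \<in> (sy (edgs T' - {(j (fst e), j (snd e))}))\<^sup>*"
  using ab
proof (induction rule: rtrancl_induct)
  case base then show ?case by simp
next
  case (step y z)
  from j have T: "is_otree T" and inj: "inj_on j (verts T)"
    and eim: "(\<lambda>(u, v). (j u, j v)) ` edgs T = edgs T'" by (auto simp: iso_alt)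
  have g: "gr T" using T by (rule otree_gr)
  have ev: "fst e \<in> verts T" "snd e \<in> verts T" using edge_verts[OF g e] by auto
  have yz: "y \<in> verts T" "z \<in> verts T" using sy_step_verts[OF g step(2)] by auto
  have ne: "(j p, j q) \<noteq> (j (fst e), j (snd e))" if "(p, q) \<in> edgs T - {e}" for p q
  proof
    assume "(j p, j q) = (j (fst e), j (snd e))"
    moreover have "p \<in> verts T" "q \<in> verts T" using that edge_verts[OF g, of "(p,q)"] by auto
    ultimately have "p = fst e" "q = snd e" using inj ev by (auto simp: inj_on_def)
    then show False using that by (cases e) auto
  qed
  have im: "(j p, j q) \<in> edgs T'" if "(p, q) \<in> edgs T" for p q
    using that eim by force
  have "(j y, j z) \<in> sy (edgs T' - {(j (fst e), j (snd e))})"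
    using step(2) ne im by (auto simp: sy_def)
  then show ?case using step(3) by (meson rtrancl_into_rtrancl)
qed

lemma iso_piece:
  assumes j: "is_iso T T' j" and e: "e \<in> edgs T" and w: "w \<in> {fst e, snd e}"
  shows "is_iso (rg T {e} w) (rg T' {(j (fst e), j (snd e))} (j w)) (restrict j (verts (rg T {e} w)))"
proof -
  let ?e' = "(j (fst e), j (snd e))"
  let ?S = "rg T {e} w" and ?S' = "rg T' {?e'} (j w)"
  let ?j' = "restrict (inv_into (verts T) j) (verts T')"
  from j have T: "is_otree T" and T': "is_otree T'" and inj: "inj_on j (verts T)"
    and im: "j ` verts T = verts T'" and eim: "(\<lambda>(u, v). (j u, j v)) ` edgs T = edgs T'"
    by (auto simp: iso_alt)
  have g: "gr T" using T by (rule otree_gr)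
  have g': "gr T'" using T' by (rule otree_gr)
  have j': "is_iso T' T ?j'" by (rule iso_inv(1)[OF j])
  have inv1: "?j' (j x) = x" if "x \<in> verts T" for x
    using that inj im by auto
  have fi: "j (?j' y) = y" "?j' y \<in> verts T" if "y \<in> verts T'" for y
  proof -
    have yy: "y \<in> j ` verts T" using that im by simp
    then show "j (?j' y) = y" using that by (simp add: f_inv_into_f)
    show "?j' y \<in> verts T" using yy that by (simp add: inv_into_into)
  qed
  have ev: "fst e \<in> verts T" "snd e \<in> verts T" using edge_verts[OF g e] by auto
  have wV: "w \<in> verts T" using w ev by auto
  have e': "?e' \<in> edgs T'" using e eim by force
  have w': "j w \<in> {fst ?e', snd ?e'}" using w by auto
  have S: "is_otree ?S" using tree_cut(2,3)[OF T e] w by auto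
  have S': "is_otree ?S'" using tree_cut(2,3)[OF T' e'] w' by auto
  have VS: "verts ?S' = j ` verts ?S"
  proof
    show "j ` verts ?S \<subseteq> verts ?S'"
    proof
      fix y' assume "y' \<in> j ` verts ?S"
      then obtain y where y: "y \<in> verts ?S" "y' = j y" by blast
      then have "(w, y) \<in> (sy (edgs T - {e}))\<^sup>*" "y \<in> verts T" by (auto simp: verts_rg)
      then show "y' \<in> verts ?S'" using iso_reach[OF j e] y im by (auto simp: verts_rg)
    qed
    show "verts ?S' \<subseteq> j ` verts ?S"
    proof
      fix y' assume y': "y' \<in> verts ?S'"
      then have r: "(j w, y') \<in> (sy (edgs T' - {?e'}))\<^sup>*" and yV: "y' \<in> verts T'"
        by (auto simp: verts_rg)
      have "(?j' (j w), ?j' y') \<in> (sy (edgs T - {(?j' (j (fst e)), ?j' (j (snd e)))}))\<^sup>*"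
        using iso_reach[OF j' e' r] by simp
      then have "(w, ?j' y') \<in> (sy (edgs T - {e}))\<^sup>*" using inv1 wV ev by simp
      then have "?j' y' \<in> verts ?S" using fi(2)[OF yV] by (simp add: verts_rg)
      then show "y' \<in> j ` verts ?S" using fi(1)[OF yV] by (metis image_eqI)
    qed
  qed
  have SV: "verts ?S \<subseteq> verts T" by (rule rg_sub)
  have ES: "(\<lambda>(u, v). (restrict j (verts ?S) u, restrict j (verts ?S) v)) ` edgs ?S = edgs ?S'"
  proof
    show "(\<lambda>(u, v). (restrict j (verts ?S) u, restrict j (verts ?S) v)) ` edgs ?S \<subseteq> edgs ?S'"
    proof
      fix p' assume "p' \<in> (\<lambda>(u, v). (restrict j (verts ?S) u, restrict j (verts ?S) v)) ` edgs ?S"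
      then obtain q where q: "q \<in> edgs ?S" "p' = (\<lambda>(u, v). (restrict j (verts ?S) u, restrict j (verts ?S) v)) q"
        by blast
      obtain a b where qab: "q = (a, b)" by (cases q)
      have abS0: "a \<in> verts ?S" "b \<in> verts ?S" using q(1) qab by (auto simp: edgs_rg)
      have ab: "(a, b) \<in> edgs ?S" "p' = (j a, j b)" using q qab abS0 by auto
      then have abE: "(a, b) \<in> edgs T - {e}" and abS: "a \<in> verts ?S" "b \<in> verts ?S"
        by (auto simp: edgs_rg)
      have "a \<in> verts T" "b \<in> verts T" using abS SV by auto
      then have ne: "(j a, j b) \<noteq> ?e'" using abE inj ev by (cases e) (auto simp: inj_on_def)
      have "(j a, j b) \<in> edgs T'" using abE eim by force
      then show "p' \<in> edgs ?S'" using ab ne abS VS by (auto simp: edgs_rg)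
    qed
    show "edgs ?S' \<subseteq> (\<lambda>(u, v). (restrict j (verts ?S) u, restrict j (verts ?S) v)) ` edgs ?S"
    proof
      fix p' assume p': "p' \<in> edgs ?S'"
      then have pE: "p' \<in> edgs T'" "p' \<noteq> ?e'" and pS: "fst p' \<in> verts ?S'" "snd p' \<in> verts ?S'"
        by (auto simp: edgs_rg)
      from pE(1) eim obtain q where q: "q \<in> edgs T" "p' = (\<lambda>(u, v). (j u, j v)) q" by blast
      obtain a b where qab: "q = (a, b)" by (cases q)
      have ab: "(a, b) \<in> edgs T" "p' = (j a, j b)" using q qab by auto
      have abV: "a \<in> verts T" "b \<in> verts T" using edge_verts[OF g ab(1)] by auto
      have "a \<in> verts ?S" "b \<in> verts ?S"
        using pS ab VS abV inj SV by (auto simp: inj_on_def)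
      moreover have "(a, b) \<noteq> e" using pE ab by auto
      ultimately have "(a, b) \<in> edgs ?S" using ab by (auto simp: edgs_rg)
      then show "p' \<in> (\<lambda>(u, v). (restrict j (verts ?S) u, restrict j (verts ?S) v)) ` edgs ?S"
        using ab \<open>a \<in> verts ?S\<close> \<open>b \<in> verts ?S\<close> by (auto intro!: image_eqI[where x = "(a, b)"])
    qed
  qed
  have injS: "inj_on (restrict j (verts ?S)) (verts ?S)"
    using inj SV by (auto simp: inj_on_def)
  have imS: "restrict j (verts ?S) ` verts ?S = verts ?S'" using VS by auto
  show ?thesis using S S' injS imS ES by (simp add: iso_alt)
qed

definition DD :: "'c \<Rightarrow> 'c \<Rightarrow> 'c \<times> 'c \<Rightarrow> 'r::comm_ring_1" where
  "DD p q k = (if k = (p, q) then 1 else 0) - (if k = (q, p) then 1 else 0)"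

definition Cl :: "(otree \<Rightarrow> 'a set) \<Rightarrow> (otree \<Rightarrow> otree \<Rightarrow> (nat \<Rightarrow> nat) \<Rightarrow> 'a \<Rightarrow> 'a) \<Rightarrow> otree \<Rightarrow> 'a \<Rightarrow> otree \<Rightarrow> (otree \<times> 'a) set" where
  "Cl obj mor T t S = cls obj mor (S, restr mor T S t)"

lemma nu_gen_eq: "nu_gen obj mor (T, t) k =
   (\<Sum>e\<in>edgs T. DD (Cl obj mor T t (rg T {e} (snd e))) (Cl obj mor T t (rg T {e} (fst e))) k)"
  by (cases k) (simp add: nu_gen_def DD_def Cl_def T1e_def T2e_def comp_tree_rg Let_def)

lemma piece_cls:
  assumes ts: "tree_structure obj mor" and j: "is_iso T T' j" and jt: "mor T T' j t' = t"
    and t': "t' \<in> obj T'" and e: "e \<in> edgs T" and w: "w \<in> {fst e, snd e}"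
  shows "Cl obj mor T t (rg T {e} w) = Cl obj mor T' t' (rg T' {(j (fst e), j (snd e))} (j w))"
proof -
  let ?e' = "(j (fst e), j (snd e))"
  let ?S = "rg T {e} w" and ?S' = "rg T' {?e'} (j w)"
  let ?j1 = "restrict j (verts ?S)"
  have iso: "is_iso ?S ?S' ?j1" by (rule iso_piece[OF j e w])
  from j have T: "is_otree T" and T': "is_otree T'" by (auto simp: iso_alt)
  from iso have S: "is_otree ?S" and S': "is_otree ?S'" and imS: "?j1 ` verts ?S = verts ?S'"
    by (auto simp: iso_alt)
  have eS: "is_emb ?S T (restrict id (verts ?S))" by (rule emb_incl[OF S T rg_sub])
  have eS': "is_emb ?S' T' (restrict id (verts ?S'))" by (rule emb_incl[OF S' T' rg_sub])
  have c1: "restr mor T ?S t = mor ?S T' (compose (verts ?S) j (restrict id (verts ?S))) t'"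
    unfolding restr_def using ts3[OF ts eS iso_emb[OF j] t'] jt by simp
  have c2: "mor ?S ?S' ?j1 (restr mor T' ?S' t') = mor ?S T' (compose (verts ?S) (restrict id (verts ?S')) ?j1) t'"
    unfolding restr_def using ts3[OF ts iso_emb[OF iso] eS' t'] by simp
  have "compose (verts ?S) j (restrict id (verts ?S)) = compose (verts ?S) (restrict id (verts ?S')) ?j1"
    using imS unfolding compose_def by (auto simp: fun_eq_iff)
  then have eq: "mor ?S ?S' ?j1 (restr mor T' ?S' t') = restr mor T ?S t" using c1 c2 by simp
  have tT: "t \<in> obj T" using jt ts1[OF ts iso_emb[OF j] t'] by simp
  have P: "(?S, restr mor T ?S t) \<in> psi_trees obj"
    using restr_in[OF ts S T rg_sub tT] S by (simp add: psi_trees_def)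
  have Q: "(?S', restr mor T' ?S' t') \<in> psi_trees obj"
    using restr_in[OF ts S' T' rg_sub t'] S' by (simp add: psi_trees_def)
  have "((?S, restr mor T ?S t), (?S', restr mor T' ?S' t')) \<in> homeo obj mor"
    using P Q iso eq unfolding homeo_def by blast
  then show ?thesis unfolding Cl_def by (rule cls_eq[OF ts])
qed

lemma nu_gen_homeo:
  assumes ts: "tree_structure obj mor" and pq: "(p, q) \<in> homeo obj mor"
  shows "nu_gen obj mor p = nu_gen obj mor q"
proof -
  obtain T t T' t' where pt: "p = (T, t)" "q = (T', t')" by (cases p, cases q)
  from pq pt obtain j where j: "is_iso T T' j" and jt: "mor T T' j t' = t"
    and Q: "(T', t') \<in> psi_trees obj" by (auto simp: homeo_def)
  have t': "t' \<in> obj T'" using Q by (simp add: psi_trees_def)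
  from j have T: "is_otree T" and inj: "inj_on j (verts T)"
    and eim: "(\<lambda>(u, v). (j u, j v)) ` edgs T = edgs T'" by (auto simp: iso_alt)
  have g: "gr T" using T by (rule otree_gr)
  let ?j2 = "\<lambda>(u, v). (j u, j v)"
  have inj2: "inj_on ?j2 (edgs T)"
  proof (rule inj_onI)
    fix a b assume a: "a \<in> edgs T" and b: "b \<in> edgs T" and eq: "?j2 a = ?j2 b"
    have "fst a \<in> verts T" "snd a \<in> verts T" "fst b \<in> verts T" "snd b \<in> verts T"
      using edge_verts[OF g a] edge_verts[OF g b] by auto
    then show "a = b" using eq inj by (cases a, cases b) (auto simp: inj_on_def)
  qed
  show ?thesis
  proof
    fix k
    have "nu_gen obj mor q k = (\<Sum>e'\<in>?j2 ` edgs T. DD (Cl obj mor T' t' (rg T' {e'} (snd e'))) (Cl obj mor T' t' (rg T' {e'} (fst e'))) k)"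
      using pt eim by (simp add: nu_gen_eq)
    also have "\<dots> = (\<Sum>e\<in>edgs T. DD (Cl obj mor T' t' (rg T' {?j2 e} (snd (?j2 e)))) (Cl obj mor T' t' (rg T' {?j2 e} (fst (?j2 e)))) k)"
      by (rule sum.reindex[OF inj2, unfolded comp_def])
    also have "\<dots> = (\<Sum>e\<in>edgs T. DD (Cl obj mor T t (rg T {e} (snd e))) (Cl obj mor T t (rg T {e} (fst e))) k)"
    proof (rule sum.cong[OF refl])
      fix e assume e: "e \<in> edgs T"
      have "?j2 e = (j (fst e), j (snd e))" by (cases e) simp
      then show "DD (Cl obj mor T' t' (rg T' {?j2 e} (snd (?j2 e)))) (Cl obj mor T' t' (rg T' {?j2 e} (fst (?j2 e)))) k
          = DD (Cl obj mor T t (rg T {e} (snd e))) (Cl obj mor T t (rg T {e} (fst e))) k"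
        using piece_cls[OF ts j jt t' e, of "fst e"] piece_cls[OF ts j jt t' e, of "snd e"] by simp
    qed
    also have "\<dots> = nu_gen obj mor p k" using pt by (simp add: nu_gen_eq)
    finally show "nu_gen obj mor p k = nu_gen obj mor q k" by (rule sym)
  qed
qed

definition ind :: "bool \<Rightarrow> 'r::comm_ring_1" where "ind b = (if b then 1 else 0)"

lemma DD_swap: "DD q p k = - DD p q k" by (simp add: DD_def)

lemma cyc_alg:
  "ind (a = P) * DD Q M (b, c) + ind (b = P) * DD Q M (c, a) + ind (c = P) * DD Q M (a, b)
   + (ind (a = Q) * DD P M (b, c) + ind (b = Q) * DD P M (c, a) + ind (c = Q) * DD P M (a, b))
   = (0::'r::comm_ring_1)"
  unfolding ind_def DD_def
  by (cases "a = P"; cases "b = P"; cases "c = P"; cases "a = Q"; cases "b = Q"; cases "c = Q"; cases "a = M"; cases "b = M"; cases "c = M"; simp)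

definition Yt :: "(otree \<Rightarrow> 'a set) \<Rightarrow> (otree \<Rightarrow> otree \<Rightarrow> (nat \<Rightarrow> nat) \<Rightarrow> 'a \<Rightarrow> 'a) \<Rightarrow> otree \<Rightarrow> 'a
   \<Rightarrow> nat \<times> nat \<Rightarrow> nat \<times> nat \<Rightarrow> (otree \<times> 'a) set \<Rightarrow> (otree \<times> 'a) set \<Rightarrow> (otree \<times> 'a) set \<Rightarrow> 'r::comm_ring_1" where
  "Yt obj mor T t e f a b c =
    (if f \<in> edgs (rg T {e} (fst e)) then ind (a = Cl obj mor T t (rg T {e} (snd e)))
     else - ind (a = Cl obj mor T t (rg T {e} (fst e))))
    * DD (Cl obj mor T t (rg T {e, f} (snd f))) (Cl obj mor T t (rg T {e, f} (fst f))) (b, c)"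

lemma pair_final:
  fixes Y1 Y2 :: "'c \<Rightarrow> 'c \<Rightarrow> 'c \<Rightarrow> 'r::comm_ring_1"
  assumes "\<And>a b c. Y1 a b c = s * (ind (a = P) * DD Q M (b, c))"
    and "\<And>a b c. Y2 a b c = s * (ind (a = Q) * DD P M (b, c))"
  shows "(Y1 a b c + Y1 b c a + Y1 c a b) + (Y2 a b c + Y2 b c a + Y2 c a b) = 0"
proof -
  have "(Y1 a b c + Y1 b c a + Y1 c a b) + (Y2 a b c + Y2 b c a + Y2 c a b) =
    s * (ind (a = P) * DD Q M (b, c) + ind (b = P) * DD Q M (c, a) + ind (c = P) * DD Q M (a, b)
   + (ind (a = Q) * DD P M (b, c) + ind (b = Q) * DD P M (c, a) + ind (c = Q) * DD P M (a, b)))"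
    using assms by (simp add: algebra_simps)
  also have "\<dots> = 0" by (simp only: cyc_alg mult_zero_right)
  finally show ?thesis .
qed

lemma pair_cancel:
  assumes T: "is_otree T" and e: "e \<in> edgs T" and f: "f \<in> edgs T" and ef: "e \<noteq> f"
  shows "(Yt obj mor T t e f a b c + Yt obj mor T t e f b c a + Yt obj mor T t e f c a b)
       + (Yt obj mor T t f e a b c + Yt obj mor T t f e b c a + Yt obj mor T t f e c a b) = (0::'r::comm_ring_1)"
proof -
  let ?C = "Cl obj mor T t"
  have fe: "f \<in> edgs T - {e}" using f ef by auto
  have ef': "e \<in> edgs T - {f}" using e ef by auto
  have fsplit: "f \<in> edgs (rg T {e} (fst e)) \<or> f \<in> edgs (rg T {e} (snd e))"
    using tree_cut(6)[OF T e] fe by blast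
  have nee: "fst e \<noteq> snd e" using tree_cut(1)[OF T e] .
  have nef: "fst f \<noteq> snd f" using tree_cut(1)[OF T f] .
  have dje: "\<not> (g \<in> edgs (rg T {e} (fst e)) \<and> g \<in> edgs (rg T {e} (snd e)))" for g
    using tree_cut_edisj[OF T e] by blast
  have djf: "\<not> (g \<in> edgs (rg T {f} (fst f)) \<and> g \<in> edgs (rg T {f} (snd f)))" for g
    using tree_cut_edisj[OF T f] by blast
  have com: "{f, e} = {e, f}" by auto
  show ?thesis
  proof (cases "f \<in> edgs (rg T {e} (fst e))")
    case True
    note fx = True
    have farE: "rg T {e, f} (snd e) = rg T {e} (snd e)"
      by (rule side_far[OF T e fx]) (use nee in auto)
    obtain y where y: "y \<in> {fst f, snd f}" and ey: "e \<in> edgs (rg T {f} y)"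
      and M: "rg T {e, f} (fst e) = rg T {e, f} y"
      using mid[OF T e fx] by auto
    show ?thesis
    proof (cases "y = fst f")
      case True
      have farF: "rg T {e, f} (snd f) = rg T {f} (snd f)"
        using com side_far[OF T f ey, of "snd f"] using y True nef by auto
      have ey1: "e \<in> edgs (rg T {f} (fst f))" using ey True by simp
      show ?thesis
        by (rule pair_final[where s = 1 and P = "?C (rg T {e, f} (snd e))"
            and Q = "?C (rg T {e, f} (snd f))" and M = "?C (rg T {e, f} (fst e))"])
          (use fx ey1 farE farF M True com in \<open>simp_all add: Yt_def\<close>)
    next
      case False
      then have ysnd: "y = snd f" using y by auto
      have farF: "rg T {e, f} (fst f) = rg T {f} (fst f)"
        using com side_far[OF T f ey, of "fst f"] using y ysnd nef by auto
      have ey1: "e \<notin> edgs (rg T {f} (fst f))" using ey ysnd djf by blast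
      show ?thesis
        by (rule pair_final[where s = "-1" and P = "?C (rg T {e, f} (snd e))"
            and Q = "?C (rg T {e, f} (fst f))" and M = "?C (rg T {e, f} (fst e))"])
          (use fx ey1 farE farF M ysnd com in \<open>simp_all add: Yt_def DD_swap[of "?C (rg T {e, f} (snd f))" "?C (rg T {f} (fst f))"]\<close>)
    qed
  next
    case False
    note fx0 = False
    then have fx: "f \<in> edgs (rg T {e} (snd e))" using fsplit by simp
    have farE: "rg T {e, f} (fst e) = rg T {e} (fst e)"
      by (rule side_far[OF T e fx]) (use nee in auto)
    obtain y where y: "y \<in> {fst f, snd f}" and ey: "e \<in> edgs (rg T {f} y)"
      and M: "rg T {e, f} (snd e) = rg T {e, f} y"
      using mid[OF T e fx] by auto
    show ?thesis
    proof (cases "y = fst f")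
      case True
      have farF: "rg T {e, f} (snd f) = rg T {f} (snd f)"
        using com side_far[OF T f ey, of "snd f"] using y True nef by auto
      have ey1: "e \<in> edgs (rg T {f} (fst f))" using ey True by simp
      show ?thesis
        by (rule pair_final[where s = "-1" and P = "?C (rg T {e, f} (fst e))"
            and Q = "?C (rg T {e, f} (snd f))" and M = "?C (rg T {e, f} (snd e))"])
          (use fx0 ey1 farE farF M True com in \<open>simp_all add: Yt_def DD_swap[of "?C (rg T {e, f} (fst f))" "?C (rg T {e} (fst e))"]\<close>)
    next
      case False
      then have ysnd: "y = snd f" using y by auto
      have farF: "rg T {e, f} (fst f) = rg T {f} (fst f)"
        using com side_far[OF T f ey, of "fst f"] using y ysnd nef by auto
      have ey1: "e \<notin> edgs (rg T {f} (fst f))" using ey ysnd djf by blast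
      show ?thesis
        by (rule pair_final[where s = 1 and P = "?C (rg T {e, f} (fst e))"
            and Q = "?C (rg T {e, f} (fst f))" and M = "?C (rg T {e, f} (snd e))"])
          (use fx0 ey1 farE farF M ysnd com in \<open>simp_all add: Yt_def DD_swap[of "?C (rg T {e, f} (snd f))" "?C (rg T {f} (fst f))"] DD_swap[of "?C (rg T {e, f} (snd f))" "?C (rg T {e} (fst e))"]\<close>)
    qed
  qed
qed

lemma otree_finE: "is_otree T \<Longrightarrow> finite (edgs T)"
  unfolding is_otree_def by (meson finite_SigmaI finite_subset)

lemma nu_cls_cls:
  assumes ts: "tree_structure obj mor" and p: "p \<in> psi_trees obj"
  shows "nu_cls obj mor (cls obj mor p) = (nu_gen obj mor p :: _ \<Rightarrow> 'r::comm_ring_1)"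
proof -
  have ex: "\<exists>q. q \<in> cls obj mor p" using cls_self[OF ts p] by blast
  let ?q = "SOME q. q \<in> cls obj mor p"
  have "?q \<in> cls obj mor p" using someI_ex[OF ex] .
  then have "(p, ?q) \<in> homeo obj mor" by (simp add: cls_def)
  then have "(nu_gen obj mor p :: _ \<Rightarrow> 'r) = nu_gen obj mor ?q" by (rule nu_gen_homeo[OF ts])
  then show ?thesis by (simp add: nu_cls_def)
qed

lemma nu_piece:
  assumes ts: "tree_structure obj mor" and T: "is_otree T" and t: "t \<in> obj T"
    and e: "e \<in> edgs T" and x: "x \<in> {fst e, snd e}"
  shows "(nu_cls obj mor (Cl obj mor T t (rg T {e} x)) k :: 'r::comm_ring_1) =
    (\<Sum>f\<in>edgs (rg T {e} x). DD (Cl obj mor T t (rg T {e, f} (snd f))) (Cl obj mor T t (rg T {e, f} (fst f))) k)"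
proof -
  let ?A = "rg T {e} x"
  let ?tA = "restr mor T ?A t"
  have A: "is_otree ?A" using tree_cut(2,3)[OF T e] x by auto
  have tA: "?tA \<in> obj ?A" by (rule restr_in[OF ts A T rg_sub t])
  have P: "(?A, ?tA) \<in> psi_trees obj" using A tA by (simp add: psi_trees_def)
  have "(nu_cls obj mor (Cl obj mor T t ?A) k :: 'r) = nu_gen obj mor (?A, ?tA) k"
    unfolding Cl_def by (rule fun_cong[OF nu_cls_cls[OF ts P]])
  also have "\<dots> = (\<Sum>f\<in>edgs ?A. DD (Cl obj mor ?A ?tA (rg ?A {f} (snd f))) (Cl obj mor ?A ?tA (rg ?A {f} (fst f))) k)"
    by (rule nu_gen_eq)
  also have "\<dots> = (\<Sum>f\<in>edgs ?A. DD (Cl obj mor T t (rg T {e, f} (snd f))) (Cl obj mor T t (rg T {e, f} (fst f))) k)"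
  proof (rule sum.cong[OF refl])
    fix f assume f: "f \<in> edgs ?A"
    have cl: "Cl obj mor ?A ?tA (rg ?A {f} z) = Cl obj mor T t (rg T {e, f} z)" if z: "z \<in> {fst f, snd f}" for z
    proof -
      have zA: "z \<in> verts ?A" using edge_verts[OF rg_gr f] z by auto
      have nest: "rg ?A {f} z = rg T {e, f} z" using rg_nest[OF otree_gr[OF T] zA, of "{f}"] by (simp add: insert_commute)
      have A': "is_otree (rg ?A {f} z)" using tree_cut(2,3)[OF A f] z by auto
      have rr: "restr mor ?A (rg ?A {f} z) ?tA = restr mor T (rg ?A {f} z) t"
        by (rule restr_restr[OF ts A' A T rg_sub rg_sub t])
      show ?thesis unfolding Cl_def using rr nest by simp
    qed
    show "DD (Cl obj mor ?A ?tA (rg ?A {f} (snd f))) (Cl obj mor ?A ?tA (rg ?A {f} (fst f))) k =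
      DD (Cl obj mor T t (rg T {e, f} (snd f))) (Cl obj mor T t (rg T {e, f} (fst f))) k"
      using cl[of "fst f"] cl[of "snd f"] by simp
  qed
  finally show ?thesis .
qed

lemma itn_eq:
  assumes "finite F" "{d. y (a, d) \<noteq> 0} \<subseteq> F"
  shows "id_tensor_nu0 obj mor y (a, b, c) = (\<Sum>d\<in>F. y (a, d) * nu_cls obj mor d (b, c))"
  unfolding id_tensor_nu0_def using assms
  by (auto intro!: sum.mono_neutral_left)

lemma DD_mult: "DD p q (a, d) * (N d :: 'r::comm_ring_1) =
   (if d = q then ind (a = p) * N d else 0) - (if d = p then ind (a = q) * N d else 0)"
  by (simp add: DD_def ind_def)

lemma W_tree:
  assumes ts: "tree_structure obj mor" and T: "is_otree T" and t: "t \<in> obj T"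
  shows "id_tensor_nu0 obj mor (nu_gen obj mor (T, t)) (a, b, c) =
    (\<Sum>e\<in>edgs T. \<Sum>f\<in>edgs T - {e}. (Yt obj mor T t e f a b c :: 'r::comm_ring_1))"
proof -
  let ?C = "Cl obj mor T t"
  define A1 where "A1 e = ?C (rg T {e} (snd e))" for e
  define A2 where "A2 e = ?C (rg T {e} (fst e))" for e
  let ?y = "nu_gen obj mor (T, t) :: _ \<Rightarrow> 'r"
  let ?N = "nu_cls obj mor :: _ \<Rightarrow> _ \<Rightarrow> 'r"
  define F0 where "F0 = A1 ` edgs T \<union> A2 ` edgs T"
  have finE: "finite (edgs T)" using T by (rule otree_finE)
  then have finF: "finite F0" by (simp add: F0_def)
  have yeq: "?y k = (\<Sum>e\<in>edgs T. DD (A1 e) (A2 e) k)" for k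
    by (simp add: nu_gen_eq A1_def A2_def)
  have supp: "{d. ?y (a, d) \<noteq> 0} \<subseteq> F0"
  proof
    fix d assume d: "d \<in> {d. ?y (a, d) \<noteq> 0}"
    show "d \<in> F0"
    proof (rule ccontr)
      assume "d \<notin> F0"
      then have "DD (A1 e) (A2 e) (a, d) = (0::'r)" if "e \<in> edgs T" for e
      proof -
        have "A1 e \<in> F0" "A2 e \<in> F0" using that by (auto simp: F0_def)
        then have "d \<noteq> A1 e" "d \<noteq> A2 e" using \<open>d \<notin> F0\<close> by auto
        then show ?thesis by (simp add: DD_def)
      qed
      then have "?y (a, d) = 0" by (simp add: yeq)
      with d show False by simp
    qed
  qed
  have "id_tensor_nu0 obj mor ?y (a, b, c) = (\<Sum>d\<in>F0. ?y (a, d) * ?N d (b, c))"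
    by (rule itn_eq[OF finF supp])
  also have "\<dots> = (\<Sum>d\<in>F0. \<Sum>e\<in>edgs T. DD (A1 e) (A2 e) (a, d) * ?N d (b, c))"
    by (simp add: yeq sum_distrib_right)
  also have "\<dots> = (\<Sum>e\<in>edgs T. \<Sum>d\<in>F0. DD (A1 e) (A2 e) (a, d) * ?N d (b, c))"
    by (rule sum.swap)
  also have "\<dots> = (\<Sum>e\<in>edgs T. \<Sum>f\<in>edgs T - {e}. (Yt obj mor T t e f a b c :: 'r))"
  proof (rule sum.cong[OF refl])
    fix e assume e: "e \<in> edgs T"
    have inF: "A1 e \<in> F0" "A2 e \<in> F0" using e by (auto simp: F0_def)
    have "(\<Sum>d\<in>F0. DD (A1 e) (A2 e) (a, d) * ?N d (b, c))
        = (\<Sum>d\<in>F0. (if d = A2 e then ind (a = A1 e) * ?N d (b, c) else 0))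
          - (\<Sum>d\<in>F0. (if d = A1 e then ind (a = A2 e) * ?N d (b, c) else 0))"
      unfolding sum_subtractf[symmetric] by (rule sum.cong[OF refl]) (rule DD_mult)
    also have "\<dots> = ind (a = A1 e) * ?N (A2 e) (b, c) - ind (a = A2 e) * ?N (A1 e) (b, c)"
      using finF inF by (simp add: sum.delta')
    also have "\<dots> = ind (a = A1 e) * (\<Sum>f\<in>edgs (rg T {e} (fst e)). DD (?C (rg T {e, f} (snd f))) (?C (rg T {e, f} (fst f))) (b, c))
        - ind (a = A2 e) * (\<Sum>f\<in>edgs (rg T {e} (snd e)). DD (?C (rg T {e, f} (snd f))) (?C (rg T {e, f} (fst f))) (b, c))"
    proof -
      have n2: "?N (A2 e) (b, c) = (\<Sum>f\<in>edgs (rg T {e} (fst e)). DD (?C (rg T {e, f} (snd f))) (?C (rg T {e, f} (fst f))) (b, c))"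
        unfolding A2_def by (rule nu_piece[OF ts T t e]) simp
      have n1: "?N (A1 e) (b, c) = (\<Sum>f\<in>edgs (rg T {e} (snd e)). DD (?C (rg T {e, f} (snd f))) (?C (rg T {e, f} (fst f))) (b, c))"
        unfolding A1_def by (rule nu_piece[OF ts T t e]) simp
      show ?thesis unfolding n1 n2 by (simp add: A1_def A2_def)
    qed
    also have "\<dots> = (\<Sum>f\<in>edgs T - {e}. (Yt obj mor T t e f a b c :: 'r))"
    proof -
      let ?E1 = "edgs (rg T {e} (fst e))" and ?E2 = "edgs (rg T {e} (snd e))"
      have un: "edgs T - {e} = ?E1 \<union> ?E2" using tree_cut(6)[OF T e] by simp
      have dj: "?E1 \<inter> ?E2 = {}" by (rule tree_cut_edisj[OF T e])
      have fin1: "finite ?E1" and fin2: "finite ?E2" using un finE by (metis finite_Diff finite_Un)+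
      have "(\<Sum>f\<in>edgs T - {e}. (Yt obj mor T t e f a b c :: 'r)) =
          (\<Sum>f\<in>?E1. Yt obj mor T t e f a b c) + (\<Sum>f\<in>?E2. Yt obj mor T t e f a b c)"
        unfolding un by (rule sum.union_disjoint[OF fin1 fin2 dj])
      also have "(\<Sum>f\<in>?E1. Yt obj mor T t e f a b c) =
          ind (a = A1 e) * (\<Sum>f\<in>?E1. DD (?C (rg T {e, f} (snd f))) (?C (rg T {e, f} (fst f))) (b, c))"
        by (simp add: sum_distrib_left Yt_def A1_def)
      also have "(\<Sum>f\<in>?E2. Yt obj mor T t e f a b c) =
          - (ind (a = A2 e) * (\<Sum>f\<in>?E2. DD (?C (rg T {e, f} (snd f))) (?C (rg T {e, f} (fst f))) (b, c)))"
      proof -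
        have "(\<Sum>f\<in>?E2. Yt obj mor T t e f a b c) =
            (\<Sum>f\<in>?E2. - (ind (a = A2 e) * DD (?C (rg T {e, f} (snd f))) (?C (rg T {e, f} (fst f))) (b, c)))"
        proof (rule sum.cong[OF refl])
          fix f assume "f \<in> ?E2"
          then have "f \<notin> ?E1" using dj by blast
          then show "Yt obj mor T t e f a b c = - (ind (a = A2 e) * DD (?C (rg T {e, f} (snd f))) (?C (rg T {e, f} (fst f))) (b, c))"
            by (simp add: Yt_def A2_def)
        qed
        then show ?thesis by (simp add: sum_distrib_left sum_negf)
      qed
      finally show ?thesis by simp
    qed
    finally show "(\<Sum>d\<in>F0. DD (A1 e) (A2 e) (a, d) * ?N d (b, c)) = (\<Sum>f\<in>edgs T - {e}. (Yt obj mor T t e f a b c :: 'r))" .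
  qed
  finally show ?thesis .
qed

lemma sum_swap_zero:
  fixes g :: "'b \<times> 'b \<Rightarrow> 'r::comm_ring_1"
  assumes "finite D" "\<forall>p\<in>D. prod.swap p \<in> D \<and> prod.swap p \<noteq> p \<and> g (prod.swap p) + g p = 0"
  shows "sum g D = 0"
  using assms
proof (induction "card D" arbitrary: D rule: less_induct)
  case less
  show ?case
  proof (cases "D = {}")
    case True then show ?thesis by simp
  next
    case False
    then obtain p where p: "p \<in> D" by blast
    let ?D' = "D - {p} - {prod.swap p}"
    have fin: "finite D" using less.prems(1) .
    have sp: "prod.swap p \<in> D" "prod.swap p \<noteq> p" "g (prod.swap p) + g p = 0"
      using less.prems(2) p by auto
    have fin': "finite ?D'" using fin by simp
    have "?D' \<subset> D" using p by auto
    then have card: "card ?D' < card D" by (rule psubset_card_mono[OF fin])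
    have hyp: "\<forall>q\<in>?D'. prod.swap q \<in> ?D' \<and> prod.swap q \<noteq> q \<and> g (prod.swap q) + g q = 0"
    proof
      fix q assume q: "q \<in> ?D'"
      have h: "prod.swap q \<in> D" "prod.swap q \<noteq> q" "g (prod.swap q) + g q = 0"
        using less.prems(2) q by auto
      have n1: "prod.swap q \<noteq> p"
      proof
        assume "prod.swap q = p"
        then have "q = prod.swap p" by auto
        with q show False by simp
      qed
      have n2: "prod.swap q \<noteq> prod.swap p"
      proof
        assume "prod.swap q = prod.swap p"
        then have "q = p" by (metis swap_swap)
        with q show False by simp
      qed
      show "prod.swap q \<in> ?D' \<and> prod.swap q \<noteq> q \<and> g (prod.swap q) + g q = 0"
        using h n1 n2 by simp
    qed
    have IH: "sum g ?D' = 0" using less.hyps[OF card fin' hyp] .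
    have s1: "sum g D = g p + sum g (D - {p})" by (rule sum.remove[OF fin p])
    have s2: "sum g (D - {p}) = g (prod.swap p) + sum g ?D'"
      by (rule sum.remove) (use fin sp in auto)
    show ?thesis using s1 s2 IH sp(3) by (simp add: add.assoc[symmetric] add.commute)
  qed
qed

lemma cyc_tree:
  assumes ts: "tree_structure obj mor" and T: "is_otree T" and t: "t \<in> obj T"
  shows "(id_tensor_nu0 obj mor (nu_gen obj mor (T, t)) (a, b, c) :: 'r::comm_ring_1)
       + id_tensor_nu0 obj mor (nu_gen obj mor (T, t)) (b, c, a)
       + id_tensor_nu0 obj mor (nu_gen obj mor (T, t)) (c, a, b) = 0"
proof -
  let ?Y = "Yt obj mor T t :: _ \<Rightarrow> _ \<Rightarrow> _ \<Rightarrow> _ \<Rightarrow> _ \<Rightarrow> 'r"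
  let ?D = "Sigma (edgs T) (\<lambda>e. edgs T - {e})"
  let ?g = "\<lambda>p. ?Y (fst p) (snd p) a b c + ?Y (fst p) (snd p) b c a + ?Y (fst p) (snd p) c a b"
  have finE: "finite (edgs T)" using T by (rule otree_finE)
  have s: "(\<Sum>e\<in>edgs T. \<Sum>f\<in>edgs T - {e}. h e f) = (\<Sum>p\<in>?D. h (fst p) (snd p))" for h :: "_ \<Rightarrow> _ \<Rightarrow> 'r"
    using finE by (simp add: sum.Sigma split_beta)
  have "id_tensor_nu0 obj mor (nu_gen obj mor (T, t)) (a, b, c)
       + id_tensor_nu0 obj mor (nu_gen obj mor (T, t)) (b, c, a)
       + id_tensor_nu0 obj mor (nu_gen obj mor (T, t)) (c, a, b) = sum ?g ?D"
    unfolding W_tree[OF ts T t] s by (simp only: sum.distrib)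
  also have "\<dots> = 0"
  proof (rule sum_swap_zero)
    show "finite ?D" using finE by simp
    show "\<forall>p\<in>?D. prod.swap p \<in> ?D \<and> prod.swap p \<noteq> p \<and> ?g (prod.swap p) + ?g p = 0"
    proof
      fix p assume p: "p \<in> ?D"
      obtain e f where ef: "p = (e, f)" by (cases p)
      have e: "e \<in> edgs T" and f: "f \<in> edgs T" and ne: "e \<noteq> f" using p ef by auto
      have "?g (prod.swap p) + ?g p = 0"
        using pair_cancel[OF T f e ne[symmetric], of obj mor t a b c] ef by simp
      then show "prod.swap p \<in> ?D \<and> prod.swap p \<noteq> p \<and> ?g (prod.swap p) + ?g p = 0"
        using e f ne ef by auto
    qed
  qed
  finally show ?thesis .
qed

lemma DD_anti: "DD P Q (b, a) = - (DD P Q (a, b) :: 'r::comm_ring_1)"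
  unfolding DD_def by (cases "b = P"; cases "a = Q"; cases "b = Q"; cases "a = P"; simp)

lemma nu_gen_anti: "(nu_gen obj mor p (b, a) :: 'r::comm_ring_1) = - nu_gen obj mor p (a, b)"
proof -
  obtain T t where p: "p = (T, t)" by (cases p)
  show ?thesis unfolding p nu_gen_eq sum_negf[symmetric]
    by (rule sum.cong[OF refl]) (rule DD_anti)
qed

lemma nu_gen_supp: "finite {k. (nu_gen obj mor p k :: 'r::comm_ring_1) \<noteq> 0}"
proof -
  obtain T t where p: "p = (T, t)" by (cases p)
  let ?C = "Cl obj mor T t"
  show ?thesis
  proof (cases "finite (edgs T)")
    case False
    then have "{k. (nu_gen obj mor p k :: 'r) \<noteq> 0} = {}" unfolding p nu_gen_eq by simp
    then show ?thesis by (metis finite.emptyI)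
  next
    case True
    have "{k. (nu_gen obj mor p k :: 'r) \<noteq> 0} \<subseteq>
      (\<lambda>e. (?C (rg T {e} (snd e)), ?C (rg T {e} (fst e)))) ` edgs T \<union>
      (\<lambda>e. (?C (rg T {e} (fst e)), ?C (rg T {e} (snd e)))) ` edgs T"
    proof
      fix k assume k: "k \<in> {k. (nu_gen obj mor p k :: 'r) \<noteq> 0}"
      then have "(\<Sum>e\<in>edgs T. DD (?C (rg T {e} (snd e))) (?C (rg T {e} (fst e))) k) \<noteq> (0::'r)"
        unfolding p nu_gen_eq by simp
      then obtain e where e: "e \<in> edgs T" and ne: "DD (?C (rg T {e} (snd e))) (?C (rg T {e} (fst e))) k \<noteq> (0::'r)"
        by (meson sum.not_neutral_contains_not_neutral)
      from ne have "k = (?C (rg T {e} (snd e)), ?C (rg T {e} (fst e))) \<or> k = (?C (rg T {e} (fst e)), ?C (rg T {e} (snd e)))"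
        unfolding DD_def by (auto split: if_splits)
      then show "k \<in> (\<lambda>e. (?C (rg T {e} (snd e)), ?C (rg T {e} (fst e)))) ` edgs T \<union>
        (\<lambda>e. (?C (rg T {e} (fst e)), ?C (rg T {e} (snd e)))) ` edgs T" using e by blast
    qed
    moreover have "finite ((\<lambda>e. (?C (rg T {e} (snd e)), ?C (rg T {e} (fst e)))) ` edgs T \<union>
      (\<lambda>e. (?C (rg T {e} (fst e)), ?C (rg T {e} (snd e)))) ` edgs T)" using True by simp
    ultimately show ?thesis by (rule finite_subset)
  qed
qed

lemma classes_rep:
  assumes ts: "tree_structure obj mor" and c: "c \<in> classes obj mor"
  obtains p where "p \<in> psi_trees obj" "c = cls obj mor p"
  using c unfolding classes_def cls_def by (auto elim: quotientE)

lemma main3: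
  assumes ts: "tree_structure obj mor" and x: "x \<in> (T0 obj mor :: (_ \<Rightarrow> 'r::comm_ring_1) set)"
  shows "id_tensor_nu0 obj mor (nu0 obj mor x) (a, b, c) + id_tensor_nu0 obj mor (nu0 obj mor x) (b, c, a)
     + id_tensor_nu0 obj mor (nu0 obj mor x) (c, a, b) = 0"
proof -
  define Sx where "Sx = {c. x c \<noteq> 0}"
  have finS: "finite Sx" and Scl: "Sx \<subseteq> classes obj mor" using x by (auto simp: T0_def Sx_def)
  let ?N = "nu_cls obj mor :: _ \<Rightarrow> _ \<Rightarrow> 'r"
  define F where "F = (\<Union>c0\<in>Sx. snd ` {k. ?N c0 k \<noteq> 0})"
  have finN: "finite {k. ?N c0 k \<noteq> 0}" for c0
    unfolding nu_cls_def by (rule nu_gen_supp)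
  have finF: "finite F" unfolding F_def using finS finN by auto
  have suppN: "{d. ?N c0 (a', d) \<noteq> 0} \<subseteq> F" if "c0 \<in> Sx" for c0 a'
  proof
    fix d assume "d \<in> {d. ?N c0 (a', d) \<noteq> 0}"
    then have "(a', d) \<in> {k. ?N c0 k \<noteq> 0}" by simp
    then have "d \<in> snd ` {k. ?N c0 k \<noteq> 0}" by (metis image_eqI snd_conv)
    then show "d \<in> F" using that unfolding F_def by blast
  qed
  have nu0eq: "nu0 obj mor x k = (\<Sum>c0\<in>Sx. x c0 * ?N c0 k)" for k
    by (simp add: nu0_def Sx_def)
  have supp0: "{d. nu0 obj mor x (a', d) \<noteq> 0} \<subseteq> F" for a'
  proof
    fix d assume "d \<in> {d. nu0 obj mor x (a', d) \<noteq> 0}"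
    then have "(\<Sum>c0\<in>Sx. x c0 * ?N c0 (a', d)) \<noteq> 0" by (simp add: nu0eq)
    then obtain c0 where "c0 \<in> Sx" "x c0 * ?N c0 (a', d) \<noteq> 0"
      by (meson sum.not_neutral_contains_not_neutral)
    then show "d \<in> F" using suppN[of c0 a'] by auto
  qed
  have lin: "id_tensor_nu0 obj mor (nu0 obj mor x) (a', b', c') =
      (\<Sum>c0\<in>Sx. x c0 * id_tensor_nu0 obj mor (?N c0) (a', b', c'))" for a' b' c'
  proof -
    have "id_tensor_nu0 obj mor (nu0 obj mor x) (a', b', c') = (\<Sum>d\<in>F. nu0 obj mor x (a', d) * ?N d (b', c'))"
      by (rule itn_eq[OF finF supp0])
    also have "\<dots> = (\<Sum>d\<in>F. \<Sum>c0\<in>Sx. x c0 * (?N c0 (a', d) * ?N d (b', c')))"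
      by (simp only: nu0eq sum_distrib_right mult.assoc)
    also have "\<dots> = (\<Sum>c0\<in>Sx. \<Sum>d\<in>F. x c0 * (?N c0 (a', d) * ?N d (b', c')))"
      by (rule sum.swap)
    also have "\<dots> = (\<Sum>c0\<in>Sx. x c0 * id_tensor_nu0 obj mor (?N c0) (a', b', c'))"
    proof (rule sum.cong[OF refl])
      fix c0 assume c0: "c0 \<in> Sx"
      show "(\<Sum>d\<in>F. x c0 * (?N c0 (a', d) * ?N d (b', c'))) = x c0 * id_tensor_nu0 obj mor (?N c0) (a', b', c')"
      proof -
        have "id_tensor_nu0 obj mor (?N c0) (a', b', c') = (\<Sum>d\<in>F. ?N c0 (a', d) * ?N d (b', c'))"
          by (rule itn_eq[OF finF suppN[OF c0]])
        then show ?thesis by (simp only: sum_distrib_left)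
      qed
    qed
    finally show ?thesis .
  qed
  have cyc0: "id_tensor_nu0 obj mor (?N c0) (a, b, c) + id_tensor_nu0 obj mor (?N c0) (b, c, a)
      + id_tensor_nu0 obj mor (?N c0) (c, a, b) = 0" if c0: "c0 \<in> Sx" for c0
  proof -
    obtain p where p: "p \<in> psi_trees obj" "c0 = cls obj mor p"
      using classes_rep[OF ts] c0 Scl by blast
    obtain T t where pt: "p = (T, t)" by (cases p)
    have T: "is_otree T" and t: "t \<in> obj T" using p pt by (auto simp: psi_trees_def)
    have "?N c0 = nu_gen obj mor (T, t)" using nu_cls_cls[OF ts p(1)] p pt by simp
    then show ?thesis using cyc_tree[OF ts T t, of a b c] by simp
  qed
  have "id_tensor_nu0 obj mor (nu0 obj mor x) (a, b, c) + id_tensor_nu0 obj mor (nu0 obj mor x) (b, c, a)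
     + id_tensor_nu0 obj mor (nu0 obj mor x) (c, a, b) =
     (\<Sum>c0\<in>Sx. x c0 * (id_tensor_nu0 obj mor (?N c0) (a, b, c) + id_tensor_nu0 obj mor (?N c0) (b, c, a)
      + id_tensor_nu0 obj mor (?N c0) (c, a, b)))"
    unfolding lin by (simp only: sum.distrib distrib_left)
  also have "\<dots> = 0" using cyc0 by simp
  finally show ?thesis .
qed

theorem lemma6p2:
  fixes obj :: "otree \<Rightarrow> 'a set"
    and mor :: "otree \<Rightarrow> otree \<Rightarrow> (nat \<Rightarrow> nat) \<Rightarrow> 'a \<Rightarrow> 'a"
  assumes "tree_structure obj mor"
  shows "(\<forall>p q. (p, q) \<in> homeo obj mor \<longrightarrow>
            (nu_gen obj mor p :: _ \<Rightarrow> 'r::comm_ring_1) = nu_gen obj mor q)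
       \<and> (\<forall>x \<in> (T0 obj mor :: (_ \<Rightarrow> 'r) set). perm2 (nu0 obj mor x) = - nu0 obj mor x)
       \<and> (\<forall>x \<in> (T0 obj mor :: (_ \<Rightarrow> 'r) set).
            (let w = id_tensor_nu0 obj mor (nu0 obj mor x)
             in (\<lambda>k. w k + tau3 w k + tau3 (tau3 w) k) = (\<lambda>k. 0)))"
proof (intro conjI ballI allI impI)
  fix p q assume "(p, q) \<in> homeo obj mor"
  then show "(nu_gen obj mor p :: _ \<Rightarrow> 'r::comm_ring_1) = nu_gen obj mor q"
    by (rule nu_gen_homeo[OF assms])
next
  fix x :: "_ \<Rightarrow> 'r" assume "x \<in> T0 obj mor"
  show "perm2 (nu0 obj mor x) = - nu0 obj mor x"
  proof
    fix k :: "(otree \<times> 'a) set \<times> (otree \<times> 'a) set"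
    obtain a b where k: "k = (a, b)" by (cases k)
    have "nu0 obj mor x (b, a) = - nu0 obj mor x (a, b)"
      unfolding nu0_def sum_negf[symmetric]
    proof (rule sum.cong[OF refl])
      fix c assume "c \<in> {c. x c \<noteq> 0}"
      have "nu_cls obj mor c (b, a) = - (nu_cls obj mor c (a, b) :: 'r)"
        unfolding nu_cls_def by (rule nu_gen_anti)
      then show "x c * nu_cls obj mor c (b, a) = - (x c * nu_cls obj mor c (a, b))" by simp
    qed
    then show "perm2 (nu0 obj mor x) k = (- nu0 obj mor x) k" by (simp add: k perm2_def)
  qed
next
  fix x :: "_ \<Rightarrow> 'r" assume x: "x \<in> T0 obj mor"
  show "let w = id_tensor_nu0 obj mor (nu0 obj mor x) in (\<lambda>k. w k + tau3 w k + tau3 (tau3 w) k) = (\<lambda>k. 0)"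
    unfolding Let_def
  proof
    fix k :: "(otree \<times> 'a) set \<times> (otree \<times> 'a) set \<times> (otree \<times> 'a) set"
    obtain a b c where k: "k = (a, b, c)" by (cases k)
    show "id_tensor_nu0 obj mor (nu0 obj mor x) k + tau3 (id_tensor_nu0 obj mor (nu0 obj mor x)) k
        + tau3 (tau3 (id_tensor_nu0 obj mor (nu0 obj mor x))) k = 0"
      using main3[OF assms x, of a b c] by (simp add: k tau3_def)
  qed
qed

end
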